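(* Let a regular network on $n$ cells with adjacency matrix $A$ be given. There exists a 2-dimensional synchrony subspace if and only if $A$ has an eigenvector $w\in\mathbb{C}^n$ whose coordinates take exactly two distinct values.
   Context: A regular network is a finite directed graph on cells $1,\dots,n$ (loops and multiple arrows allowed) in which every cell receives the same number $v$ of arrows (the valency). Its adjacency matrix $A=[a_{ij}]$ has $a_{ij}$ equal to the number of arrows cell $i$ receives from cell $j$; every row sum is $v$. $A$ acts on $\mathbb{C}^n$. A polydiagonal is a subspace of $\mathbb{C}^n$ of the form $\{x : x_i=x_j \text{ for all } (i,j)\in R\}$ for some (possibly empty) set $R$ of index pairs. A synchrony subspace is a polydiagonal that is invariant under $A$. *)

theory Defs
  imports "HOL-Analysis.Analysis"
begin

text \<open>Cells are the elements of a finite type 'n (so n = CARD('n)).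
  A network is given by its adjacency matrix A with natural-number entries:
  A $ i $ j = number of arrows cell i receives from cell j.\<close>

definition regular_network :: "nat ^ 'n ^ 'n \<Rightarrow> bool" where
  "regular_network A \<longleftrightarrow> (\<exists>v. \<forall>i. (\<Sum>j\<in>UNIV. A $ i $ j) = v)"

definition cmat :: "nat ^ 'n ^ 'n \<Rightarrow> complex ^ 'n ^ 'n" where
  "cmat A = (\<chi> i j. of_nat (A $ i $ j))"

definition polydiagonal :: "('n \<times> 'n) set \<Rightarrow> (complex ^ 'n) set" where
  "polydiagonal R = {x. \<forall>(i, j)\<in>R. x $ i = x $ j}"

definition synchrony_subspace :: "nat ^ 'n ^ 'n \<Rightarrow> (complex ^ 'n) set \<Rightarrow> bool" where
  "synchrony_subspace A S \<longleftrightarrow>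
     (\<exists>R. S = polydiagonal R) \<and> (\<forall>x\<in>S. cmat A *v x \<in> S)"

end

theory Submission
  imports Defs
begin

lemma cmat_mv: "(cmat A *v x) $ i = (\<Sum>j\<in>UNIV. of_nat (A $ i $ j) * x $ j)"
  by (simp add: cmat_def matrix_vector_mult_def)

lemma poly_subspace: "vec.subspace (polydiagonal R)"
  unfolding vec.subspace_def polydiagonal_def by (auto simp: case_prod_beta)

lemma one_in_poly: "(\<chi> k. c) \<in> polydiagonal R"
  unfolding polydiagonal_def by auto

lemma indep2:
  fixes e one :: "complex ^ 'n"
  assumes "one $ i = one $ j" "e $ i \<noteq> e $ j" "one \<noteq> 0"
  shows "vec.independent {e, one}" "card {e, one} = 2"
proof -
  have "e \<notin> vec.span {one}"
  proof
    assume "e \<in> vec.span {one}"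
    then obtain k where "e = k *s one" by (auto simp: vec.span_singleton)
    then show False using assms by auto
  qed
  moreover have "vec.independent {one}" using assms(3)
    by (simp add: vec.independent_insert)
  moreover have "e \<noteq> one" using assms by auto
  ultimately show "vec.independent {e, one}" "card {e, one} = 2"
    by (auto simp: vec.independent_insert)
qed

theorem mainTheorem8:
  fixes A :: "nat ^ 'n ^ 'n"
  assumes "regular_network A"
  shows "(\<exists>S. synchrony_subspace A S \<and> vec.dim S = 2) \<longleftrightarrow>
         (\<exists>w :: complex ^ 'n. \<exists>\<mu> :: complex. w \<noteq> 0 \<and> cmat A *v w = \<mu> *s w
              \<and> card (range (\<lambda>i. w $ i)) = 2)"
proof -
  obtain v where v: "\<And>i. (\<Sum>j\<in>UNIV. A $ i $ j) = v"
    using assms unfolding regular_network_def by blast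
  define one :: "complex ^ 'n" where "one = (\<chi> k. 1)"
  have one_nz: "one \<noteq> 0" by (simp add: one_def vec_eq_iff)
  have Aone: "cmat A *v one = of_nat v *s one"
  proof -
    have "(\<Sum>j\<in>UNIV. of_nat (A $ i $ j) :: complex) = of_nat v" for i
      using v[of i] by (metis of_nat_sum)
    then show ?thesis by (simp add: vec_eq_iff cmat_mv one_def)
  qed
  show ?thesis
  proof
    assume "\<exists>S. synchrony_subspace A S \<and> vec.dim S = 2"
    then obtain S R where SR: "S = polydiagonal R" and inv: "\<And>x. x \<in> S \<Longrightarrow> cmat A *v x \<in> S"
      and dS: "vec.dim S = 2"
      unfolding synchrony_subspace_def by blast
    have oneS: "one \<in> S" using SR one_in_poly one_def by metis
    have "\<exists>x\<in>S. \<exists>i j. x $ i \<noteq> x $ j"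
    proof (rule ccontr)
      assume nc: "\<not> ?thesis"
      have "S \<subseteq> vec.span {one}"
      proof
        fix x assume "x \<in> S"
        then have "x = (x $ undefined) *s one" using nc
          by (auto simp: vec_eq_iff one_def)
        then show "x \<in> vec.span {one}" by (metis vec.span_base vec.span_scale singletonI)
      qed
      then have "vec.dim S \<le> card {one}" by (intro vec.dim_le_card) auto
      then show False using dS by simp
    qed
    then obtain x i j where xS: "x \<in> S" and xij: "x $ i \<noteq> x $ j" by blast
    define P where "P = {k. x $ k = x $ i}"
    define e :: "complex ^ 'n" where "e = (\<chi> k. if k \<in> P then 1 else 0)"
    have iP: "i \<in> P" and jP: "j \<notin> P" using xij by (auto simp: P_def)
    have eS: "e \<in> S" using xS unfolding SR polydiagonal_def e_def P_def by auto
    have ind: "vec.independent {e, one}" "card {e, one} = 2"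
      using indep2[of one i j e] iP jP one_nz by (auto simp: e_def one_def)
    have Ssp: "S \<subseteq> vec.span {e, one}"
      using vec.card_ge_dim_independent[of "{e, one}" S] ind eS oneS dS by auto
    have "cmat A *v e \<in> vec.span {e, one}" using inv eS Ssp by auto
    then obtain b a where ab: "cmat A *v e - b *s e = a *s one"
      by (auto simp: vec.span_insert vec.span_singleton)
    have Ae: "(cmat A *v e) $ k = of_nat (\<Sum>j\<in>P. A $ k $ j)" for k
    proof -
      have "(cmat A *v e) $ k = (\<Sum>j\<in>UNIV. if j \<in> P then of_nat (A $ k $ j) else 0)"
        by (simp add: cmat_mv e_def if_distrib cong: if_cong)
      also have "\<dots> = (\<Sum>j\<in>P. of_nat (A $ k $ j))"
        by (simp add: sum.If_cases)
      finally show ?thesis by simp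
    qed
    define \<alpha> where "\<alpha> = (\<Sum>l\<in>P. A $ i $ l)"
    define \<gamma> where "\<gamma> = (\<Sum>l\<in>P. A $ j $ l)"
    have al: "\<alpha> \<le> v" unfolding \<alpha>_def v[of i, symmetric]
      by (rule sum_mono2) auto
    have ej: "e $ j = 0" and ei: "e $ i = 1" using iP jP by (auto simp: e_def)
    have eqj: "of_nat \<gamma> = a" using arg_cong[OF ab, of "\<lambda>y. y $ j"] ej Ae[of j]
      by (simp add: one_def \<gamma>_def)
    have eqi: "of_nat \<alpha> = a + b" using arg_cong[OF ab, of "\<lambda>y. y $ i"] ei Ae[of i]
      by (simp add: one_def \<alpha>_def algebra_simps)
    have Aeab: "cmat A *v e = b *s e + a *s one" using ab by (simp add: algebra_simps)
    show "\<exists>w :: complex ^ 'n. \<exists>\<mu> :: complex. w \<noteq> 0 \<and> cmat A *v w = \<mu> *s w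
              \<and> card (range (\<lambda>i. w $ i)) = 2"
    proof (cases "b = of_nat v")
      case True
      then have "of_nat \<alpha> = (of_nat (\<gamma> + v) :: complex)" using eqi eqj by simp
      then have "\<alpha> = \<gamma> + v" using of_nat_eq_iff by blast
      then have "\<gamma> = 0" using al by simp
      then have "a = 0" using eqj by simp
      then have "cmat A *v e = b *s e" using Aeab by simp
      moreover have "range (\<lambda>k. e $ k) = {1, 0}"
        using iP jP by (auto simp: e_def)
      moreover have "e \<noteq> 0" using iP by (auto simp: e_def vec_eq_iff)
      ultimately show ?thesis by auto
    next
      case False
      define c where "c = a / (b - of_nat v)"
      have c: "a + c * of_nat v = b * c" using False by (simp add: c_def field_simps)
      define w where "w = e + c *s one"
      have "cmat A *v w = cmat A *v e + c *s (cmat A *v one)"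
        by (simp add: w_def vec.add vec.scale)
      also have "\<dots> = b *s w"
        unfolding Aeab Aone
      proof (subst vec_eq_iff, rule allI)
        fix k
        have "(b *s e + a *s one + c *s (of_nat v *s one)) $ k = b * e $ k + a + c * of_nat v"
          by (simp add: one_def)
        also have "\<dots> = b * (e $ k + c)" using c by algebra
        also have "\<dots> = (b *s w) $ k"
          by (simp add: w_def one_def; algebra)
        finally show "(b *s e + a *s one + c *s (of_nat v *s one)) $ k = (b *s w) $ k" .
      qed
      finally have "cmat A *v w = b *s w" .
      moreover have "range (\<lambda>k. w $ k) = {1 + c, c}"
        using iP jP by (auto simp: w_def e_def one_def)
      moreover have "w \<noteq> 0"
      proof
        assume "w = 0"
        then have "w $ i = w $ j" by simp
        then show False using iP jP by (simp add: w_def e_def one_def)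
      qed
      ultimately show ?thesis by auto
    qed
  next
    assume "\<exists>w :: complex ^ 'n. \<exists>\<mu> :: complex. w \<noteq> 0 \<and> cmat A *v w = \<mu> *s w
              \<and> card (range (\<lambda>i. w $ i)) = 2"
    then obtain w \<mu> where Aw: "cmat A *v w = \<mu> *s w" and cw: "card (range (\<lambda>i. w $ i)) = 2"
      by blast
    then obtain a b where rab: "range (\<lambda>i. w $ i) = {a, b}" and ab: "a \<noteq> b"
      by (auto simp: card_2_iff)
    obtain i0 where i0: "w $ i0 = a" using rab by (metis insertI1 rangeE)
    obtain j0 where j0: "w $ j0 = b" using rab by (metis insertI1 insert_commute rangeE)
    have wab: "w $ k = a \<or> w $ k = b" for k using rab by blast
    define R where "R = {(i, j). w $ i = w $ j}"
    define S where "S = polydiagonal R"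
    have wS: "w \<in> S" by (auto simp: S_def R_def polydiagonal_def)
    have oneS: "one \<in> S" using S_def one_in_poly one_def by metis
    have repr: "x = ((x $ i0 - x $ j0) / (a - b)) *s w
                  + (x $ i0 - ((x $ i0 - x $ j0) / (a - b)) * a) *s one" if "x \<in> S" for x
    proof -
      have xR: "\<forall>(i, j)\<in>R. x $ i = x $ j" using that by (simp add: S_def polydiagonal_def)
      have xk: "x $ k = x $ l" if kl: "w $ k = w $ l" for k l
      proof -
        have "(k, l) \<in> R" using kl by (simp add: R_def)
        from bspec[OF xR this] show ?thesis by simp
      qed
      have ab': "a - b \<noteq> 0" using ab by simp
      show ?thesis
      proof (subst vec_eq_iff, rule allI)
        fix k
        show "x $ k = (((x $ i0 - x $ j0) / (a - b)) *s w
                  + (x $ i0 - ((x $ i0 - x $ j0) / (a - b)) * a) *s one) $ k"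
        proof (cases "w $ k = a")
          case True
          then have "x $ k = x $ i0" using xk i0 by metis
          then show ?thesis using True by (simp add: one_def)
        next
          case False
          then have wk: "w $ k = b" using wab by blast
          then have xkj: "x $ k = x $ j0" using xk j0 by metis
          define q where "q = (x $ i0 - x $ j0) / (a - b)"
          have q: "q * (a - b) = x $ i0 - x $ j0" using ab' by (simp add: q_def)
          have "((q *s w) + (x $ i0 - q * a) *s one) $ k = q * b + (x $ i0 - q * a)"
            by (simp add: one_def wk)
          also have "\<dots> = x $ i0 - q * (a - b)" by algebra
          also have "\<dots> = x $ k" using q xkj by simp
          finally show ?thesis unfolding q_def by simp
        qed
      qed
    qed
    have Seq: "S = vec.span {w, one}"
    proof
      show "S \<subseteq> vec.span {w, one}"
      proof
        fix x assume "x \<in> S"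
        then obtain q p where "x = q *s w + p *s one" using repr by blast
        also have "\<dots> \<in> vec.span {w, one}"
          by (intro vec.span_add vec.span_scale vec.span_base) auto
        finally show "x \<in> vec.span {w, one}" .
      qed
      show "vec.span {w, one} \<subseteq> S"
        using poly_subspace[of R] wS oneS unfolding S_def
        by (intro vec.span_minimal) auto
    qed
    have ind: "vec.independent {w, one}" "card {w, one} = 2"
      using indep2[of one i0 j0 w] one_nz i0 j0 ab by (auto simp: one_def)
    have "synchrony_subspace A S"
      unfolding synchrony_subspace_def
    proof (intro conjI)
      show "\<exists>R. S = polydiagonal R" using S_def by blast
      show "\<forall>x\<in>S. cmat A *v x \<in> S"
      proof
        fix x assume "x \<in> S"
        then obtain q p where "x = q *s w + p *s one" using repr by blast
        then have "cmat A *v x \<in> vec.span {w, one}"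
          by (simp add: vec.add vec.scale Aw Aone vec.span_add vec.span_scale vec.span_base)
        then show "cmat A *v x \<in> S" using Seq by simp
      qed
    qed
    moreover have "vec.dim S = 2" using Seq ind vec.dim_span_eq_card_independent by metis
    ultimately show "\<exists>S. synchrony_subspace A S \<and> vec.dim S = 2" by blast
  qed
qed

end
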